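(* Let $K$ be a solid cone in a vector space with convergence $(Y,\to)$. Then its interior $K^\circ$ satisfies: (i) $\lambda K^\circ\subseteq K^\circ$ for every $\lambda>0$; (ii) $K+K^\circ\subseteq K^\circ$; (iii) $0\notin K^\circ$. Conversely, if $V$ is a nonempty open subset of $K$ satisfying (i)–(iii) (with $K^\circ$ replaced by $V$), then $V$ is the interior of $K$.
   Context: Vector space with convergence: a real vector space $Y$ with a relation $\to$ between sequences in $Y$ and points of $Y$ (write $x_n\to x$; uniqueness of limits not assumed) such that (C1) $x_n\to x$, $y_n\to y$ imply $x_n+y_n\to x+y$; (C2) $x_n\to x$, $\lambda\in\mathbb R$ imply $\lambda x_n\to\lambda x$; (C3) $\lambda_n\to\lambda$ in $\mathbb R$, $x\in Y$ imply $\lambda_n x\to\lambda x$. A set $A\subseteq Y$ is open if $x_n\to x\in A$ implies $x_n\in A$ for all but finitely many $n$; closed if $x_n\to x$ and $x_n\in A$ for all $n$ imply $x\in A$. The interior $A^\circ$ is the union of all open subsets of $Y$ contained in $A$. A cone is a nonempty closed $K\subseteq Y$ with $\lambda K\subseteq K$ for all $\lambda\ge0$, $K+K\subseteq K$, $K\cap(-K)=\{0\}$; it is solid if $K\neq\{0\}$ and $K^\circ\neq\emptyset$. *)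

theory Defs
  imports Main "HOL-Analysis.Analysis"
begin

text \<open>Uniqueness of limits is not assumed.\<close>

definition vs_conv :: "((nat \<Rightarrow> 'a::real_vector) \<Rightarrow> 'a \<Rightarrow> bool) \<Rightarrow> bool" where
  "vs_conv conv \<longleftrightarrow>
     (\<forall>x y a b. conv x a \<longrightarrow> conv y b \<longrightarrow> conv (\<lambda>n. x n + y n) (a + b)) \<and>
     (\<forall>x a (c::real). conv x a \<longrightarrow> conv (\<lambda>n. c *\<^sub>R x n) (c *\<^sub>R a)) \<and>
     (\<forall>(l::nat \<Rightarrow> real) c z. l \<longlonglongrightarrow> c \<longrightarrow> conv (\<lambda>n. l n *\<^sub>R z) (c *\<^sub>R z))"

definition conv_open :: "((nat \<Rightarrow> 'a) \<Rightarrow> 'a \<Rightarrow> bool) \<Rightarrow> 'a set \<Rightarrow> bool" where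
  "conv_open conv A \<longleftrightarrow>
     (\<forall>x a. conv x a \<longrightarrow> a \<in> A \<longrightarrow> (\<forall>\<^sub>F n in sequentially. x n \<in> A))"

definition conv_closed :: "((nat \<Rightarrow> 'a) \<Rightarrow> 'a \<Rightarrow> bool) \<Rightarrow> 'a set \<Rightarrow> bool" where
  "conv_closed conv A \<longleftrightarrow> (\<forall>x a. conv x a \<longrightarrow> (\<forall>n. x n \<in> A) \<longrightarrow> a \<in> A)"

definition conv_interior :: "((nat \<Rightarrow> 'a) \<Rightarrow> 'a \<Rightarrow> bool) \<Rightarrow> 'a set \<Rightarrow> 'a set" where
  "conv_interior conv A = \<Union>{U. conv_open conv U \<and> U \<subseteq> A}"

definition conv_cone :: "((nat \<Rightarrow> 'a::real_vector) \<Rightarrow> 'a \<Rightarrow> bool) \<Rightarrow> 'a set \<Rightarrow> bool" where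
  "conv_cone conv K \<longleftrightarrow> K \<noteq> {} \<and> conv_closed conv K \<and>
     (\<forall>(c::real) x. c \<ge> 0 \<longrightarrow> x \<in> K \<longrightarrow> c *\<^sub>R x \<in> K) \<and>
     (\<forall>x y. x \<in> K \<longrightarrow> y \<in> K \<longrightarrow> x + y \<in> K) \<and>
     K \<inter> uminus ` K = {0}"

definition solid_cone :: "((nat \<Rightarrow> 'a::real_vector) \<Rightarrow> 'a \<Rightarrow> bool) \<Rightarrow> 'a set \<Rightarrow> bool" where
  "solid_cone conv K \<longleftrightarrow> conv_cone conv K \<and> K \<noteq> {0} \<and> conv_interior conv K \<noteq> {}"

end

theory Submission
  imports Defs
begin

lemma vc_add: "vs_conv conv \<Longrightarrow> conv x a \<Longrightarrow> conv y b \<Longrightarrow> conv (\<lambda>n. x n + y n) (a + b)"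
  unfolding vs_conv_def by blast

lemma vc_scale: "vs_conv conv \<Longrightarrow> conv x a \<Longrightarrow> conv (\<lambda>n. c *\<^sub>R x n) (c *\<^sub>R a)"
  unfolding vs_conv_def by blast

lemma vc_lim: "vs_conv conv \<Longrightarrow> l \<longlonglongrightarrow> c \<Longrightarrow> conv (\<lambda>n. l n *\<^sub>R z) (c *\<^sub>R z)"
  unfolding vs_conv_def by blast

lemma vc_const: "vs_conv conv \<Longrightarrow> conv (\<lambda>n. z) z"
  using vc_lim[of conv "\<lambda>n. 1" 1 z] by simp

lemma open_interior: "conv_open conv (conv_interior conv A)"
proof -
  have "\<forall>\<^sub>F n in sequentially. x n \<in> conv_interior conv A"
    if xa: "conv x a" and a: "a \<in> conv_interior conv A" for x a
  proof -
    obtain U where U: "conv_open conv U" "U \<subseteq> A" "a \<in> U" using a unfolding conv_interior_def by blast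
    then have "\<forall>\<^sub>F n in sequentially. x n \<in> U" using xa unfolding conv_open_def by blast
    then show ?thesis
    proof (rule eventually_mono)
      fix n assume "x n \<in> U" then show "x n \<in> conv_interior conv A" using U unfolding conv_interior_def by blast
    qed
  qed
  then show ?thesis unfolding conv_open_def by blast
qed

lemma open_sub_interior: "conv_open conv U \<Longrightarrow> U \<subseteq> A \<Longrightarrow> U \<subseteq> conv_interior conv A"
  unfolding conv_interior_def by blast

lemma interior_sub: "conv_interior conv A \<subseteq> A"
  unfolding conv_interior_def by blast

lemma open_scale:
  assumes vc: "vs_conv conv" and U: "conv_open conv U" and c: "c \<noteq> 0"
  shows "conv_open conv ((\<lambda>x. c *\<^sub>R x) ` U)"
  unfolding conv_open_def
proof (intro allI impI)
  fix x a assume x: "conv x a" and a: "a \<in> (\<lambda>x. c *\<^sub>R x) ` U"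
  then obtain u where u: "u \<in> U" "a = c *\<^sub>R u" by blast
  have "conv (\<lambda>n. inverse c *\<^sub>R x n) (inverse c *\<^sub>R a)" using vc_scale[OF vc x] .
  moreover have "inverse c *\<^sub>R a = u" using u c by simp
  ultimately have "\<forall>\<^sub>F n in sequentially. inverse c *\<^sub>R x n \<in> U"
    using U u unfolding conv_open_def by metis
  then show "\<forall>\<^sub>F n in sequentially. x n \<in> (\<lambda>x. c *\<^sub>R x) ` U"
  proof (rule eventually_mono)
    fix n assume "inverse c *\<^sub>R x n \<in> U"
    moreover have "x n = c *\<^sub>R (inverse c *\<^sub>R x n)" using c by simp
    ultimately show "x n \<in> (\<lambda>x. c *\<^sub>R x) ` U" by blast
  qed
qed

lemma open_trans:
  assumes vc: "vs_conv conv" and U: "conv_open conv U"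
  shows "conv_open conv ((\<lambda>y. w + y) ` U)"
  unfolding conv_open_def
proof (intro allI impI)
  fix x a assume x: "conv x a" and a: "a \<in> (\<lambda>y. w + y) ` U"
  then obtain u where u: "u \<in> U" "a = w + u" by blast
  have "conv (\<lambda>n. x n + (- w)) (a + (- w))" using vc_add[OF vc x vc_const[OF vc, of "- w"]] .
  moreover have "a + (- w) = u" using u by simp
  ultimately have "\<forall>\<^sub>F n in sequentially. x n + (- w) \<in> U"
    using U u unfolding conv_open_def by metis
  then show "\<forall>\<^sub>F n in sequentially. x n \<in> (\<lambda>y. w + y) ` U"
  proof (rule eventually_mono)
    fix n assume "x n + (- w) \<in> U"
    moreover have "x n = w + (x n + (- w))" by simp
    ultimately show "x n \<in> (\<lambda>y. w + y) ` U" by blast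
  qed
qed

lemma lim_inv: "(\<lambda>n::nat. - (1 / (real n + 1))) \<longlonglongrightarrow> 0"
  using tendsto_minus[OF LIMSEQ_inverse_real_of_nat] by (simp add: inverse_eq_divide add.commute)

theorem theorem3p3:
  fixes conv :: "(nat \<Rightarrow> 'a::real_vector) \<Rightarrow> 'a \<Rightarrow> bool" and K :: "'a set"
  assumes "vs_conv conv" and "solid_cone conv K"
  shows "(\<forall>c::real. c > 0 \<longrightarrow> (\<lambda>x. c *\<^sub>R x) ` conv_interior conv K \<subseteq> conv_interior conv K)
       \<and> (\<forall>x\<in>K. \<forall>y\<in>conv_interior conv K. x + y \<in> conv_interior conv K)
       \<and> 0 \<notin> conv_interior conv K
       \<and> (\<forall>V. V \<noteq> {} \<and> conv_open conv V \<and> V \<subseteq> K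
             \<and> (\<forall>c::real. c > 0 \<longrightarrow> (\<lambda>x. c *\<^sub>R x) ` V \<subseteq> V)
             \<and> (\<forall>x\<in>K. \<forall>y\<in>V. x + y \<in> V)
             \<and> 0 \<notin> V
             \<longrightarrow> V = conv_interior conv K)"
proof -
  note vc = assms(1)
  let ?I = "conv_interior conv K"
  have Kne: "K \<noteq> {}" and Kscale: "\<And>c x. c \<ge> 0 \<Longrightarrow> x \<in> K \<Longrightarrow> c *\<^sub>R x \<in> K"
    and Kadd: "\<And>x y. x \<in> K \<Longrightarrow> y \<in> K \<Longrightarrow> x + y \<in> K"
    and Kneg: "K \<inter> uminus ` K = {0}" and K0: "K \<noteq> {0}"
    using assms(2) unfolding solid_cone_def conv_cone_def by auto
  have oI: "conv_open conv ?I" by (rule open_interior)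
  have IK: "?I \<subseteq> K" by (rule interior_sub)
  have P1: "\<forall>c::real. c > 0 \<longrightarrow> (\<lambda>x. c *\<^sub>R x) ` ?I \<subseteq> ?I"
  proof (intro allI impI)
    fix c :: real assume "c > 0"
    show "(\<lambda>x. c *\<^sub>R x) ` ?I \<subseteq> ?I"
      apply (rule open_sub_interior)
      using open_scale[OF vc oI, of c] \<open>c > 0\<close> IK Kscale by auto
  qed
  have P2: "\<forall>x\<in>K. \<forall>y\<in>?I. x + y \<in> ?I"
  proof (intro ballI)
    fix x y assume x: "x \<in> K" and y: "y \<in> ?I"
    have "(\<lambda>y. x + y) ` ?I \<subseteq> ?I"
      apply (rule open_sub_interior)
      using open_trans[OF vc oI, of x] IK Kadd x by auto
    then show "x + y \<in> ?I" using y by blast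
  qed
  have P3: "0 \<notin> ?I"
  proof
    assume 0: "0 \<in> ?I"
    obtain z where z: "z \<in> K" "z \<noteq> 0" using Kne K0 by blast
    have "conv (\<lambda>n. (- (1 / (real n + 1))) *\<^sub>R z) (0 *\<^sub>R z)" using vc_lim[OF vc lim_inv] .
    then have "conv (\<lambda>n. (- (1 / (real n + 1))) *\<^sub>R z) 0" by simp
    then have "\<forall>\<^sub>F n in sequentially. (- (1 / (real n + 1))) *\<^sub>R z \<in> ?I"
      using oI 0 unfolding conv_open_def by blast
    then obtain N where "(- (1 / (real N + 1))) *\<^sub>R z \<in> ?I"
      by (meson eventually_sequentially order_refl)
    then have "(- (1 / (real N + 1))) *\<^sub>R z \<in> K" using IK by blast
    note zK = this
    have "(real N + 1) *\<^sub>R ((- (1 / (real N + 1))) *\<^sub>R z) \<in> K"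
      by (rule Kscale[OF _ zK]) simp
    moreover have "(real N + 1) *\<^sub>R ((- (1 / (real N + 1))) *\<^sub>R z) = - z"
    proof -
      have "(real N + 1) * (- (1 / (real N + 1))) = -1" by (simp add: field_simps)
      then show ?thesis by (simp only: scaleR_scaleR) simp
    qed
    ultimately have mz: "- z \<in> K" by (simp only:)
    have "z = - (- z)" by simp
    then have "z \<in> uminus ` K" using mz by blast
    then have "z \<in> K \<inter> uminus ` K" using z by blast
    then show False using Kneg z by blast
  qed
  have P4: "\<forall>V. V \<noteq> {} \<and> conv_open conv V \<and> V \<subseteq> K
             \<and> (\<forall>c::real. c > 0 \<longrightarrow> (\<lambda>x. c *\<^sub>R x) ` V \<subseteq> V)
             \<and> (\<forall>x\<in>K. \<forall>y\<in>V. x + y \<in> V)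
             \<and> 0 \<notin> V
             \<longrightarrow> V = ?I"
  proof (intro allI impI)
    fix V assume H: "V \<noteq> {} \<and> conv_open conv V \<and> V \<subseteq> K
             \<and> (\<forall>c::real. c > 0 \<longrightarrow> (\<lambda>x. c *\<^sub>R x) ` V \<subseteq> V)
             \<and> (\<forall>x\<in>K. \<forall>y\<in>V. x + y \<in> V)
             \<and> 0 \<notin> V"
    show "V = ?I"
    proof
      show "V \<subseteq> ?I" using H open_sub_interior by blast
      show "?I \<subseteq> V"
      proof
        fix y assume y: "y \<in> ?I"
        obtain v where v: "v \<in> V" using H by blast
        have "conv (\<lambda>n. y + (- (1 / (real n + 1))) *\<^sub>R v) (y + 0 *\<^sub>R v)"
          using vc_add[OF vc vc_const[OF vc, of y] vc_lim[OF vc lim_inv, of v]] .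
        then have "conv (\<lambda>n. y + (- (1 / (real n + 1))) *\<^sub>R v) y" by simp
        then have "\<forall>\<^sub>F n in sequentially. y + (- (1 / (real n + 1))) *\<^sub>R v \<in> ?I"
          using oI y unfolding conv_open_def by blast
        then obtain N where N: "y + (- (1 / (real N + 1))) *\<^sub>R v \<in> ?I"
          by (meson eventually_sequentially order_refl)
        then have a: "y + (- (1 / (real N + 1))) *\<^sub>R v \<in> K" using IK by blast
        have Hs: "(\<lambda>x. (1 / (real N + 1)) *\<^sub>R x) ` V \<subseteq> V"
        proof -
          have A: "\<forall>c::real. c > 0 \<longrightarrow> (\<lambda>x. c *\<^sub>R x) ` V \<subseteq> V" using H by (elim conjE)
          have "(1 / (real N + 1)) > 0" by simp
          then show ?thesis using A by blast
        qed
        have "(1 / (real N + 1)) *\<^sub>R v \<in> V" using Hs v by blast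
        then have "(y + (- (1 / (real N + 1))) *\<^sub>R v) + (1 / (real N + 1)) *\<^sub>R v \<in> V"
          using H a by blast
        then show "y \<in> V" by simp
      qed
    qed
  qed
  show ?thesis using P1 P2 P3 P4 by blast
qed

end
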